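(* Let $\Gamma$ be a second countable locally compact abelian group, $n\ge2$, and $\omega\in\Gamma^n$ such that $K\omega_1=0$ for some positive integer $K$ and $-\omega_j\notin\Omega_{\{1\}}$ for every $j\ne1$. Let $\Omega=\{\omega_\mu:\mu\text{ a word}\}$. Then for every $\gamma\in\Gamma$ there is a neighborhood $U$ of $\gamma$ with $(U\setminus\{\gamma\})\cap\Omega=\emptyset$.
   Context: Words are finite sequences $\mu=(i_1,\ldots,i_k)$ in $\{1,\ldots,n\}$ including the empty word, and $\omega_\mu=\sum_j\omega_{i_j}$, so $\Omega$ is the (algebraic) semigroup generated by $\omega_1,\ldots,\omega_n$ together with $0$. $\Omega_{\{1\}}$ is the closed subsemigroup of $\Gamma$ generated by $\omega_1,\ldots,\omega_n$ and $-\omega_1$. *)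

theory Defs
  imports "HOL-Analysis.Analysis"
begin

definition word_sum :: "(nat \<Rightarrow> 'a::comm_monoid_add) \<Rightarrow> nat list \<Rightarrow> 'a" where
  "word_sum \<omega> \<mu> = sum_list (map \<omega> \<mu>)"

definition Omega_set :: "nat \<Rightarrow> (nat \<Rightarrow> 'a::comm_monoid_add) \<Rightarrow> 'a set" where
  "Omega_set n \<omega> = {word_sum \<omega> \<mu> | \<mu>. \<mu> \<in> lists {1..n}}"

definition closed_subsemigroup_gen :: "'a::{topological_space,plus} set \<Rightarrow> 'a set" where
  "closed_subsemigroup_gen G =
     \<Inter>{S. closed S \<and> G \<subseteq> S \<and> (\<forall>x\<in>S. \<forall>y\<in>S. x + y \<in> S)}"

definition Omega_1 :: "nat \<Rightarrow> (nat \<Rightarrow> 'a::{topological_space,ab_group_add}) \<Rightarrow> 'a set" where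
  "Omega_1 n \<omega> = closed_subsemigroup_gen (\<omega> ` {1..n} \<union> {- \<omega> 1})"

end

theory Submission
  imports Defs
begin

definition nmul :: "nat \<Rightarrow> 'a::monoid_add \<Rightarrow> 'a" where
  "nmul c x = sum_list (replicate c x)"

lemma nmul_0[simp]: "nmul 0 x = 0" by (simp add: nmul_def)
lemma nmul_Suc: "nmul (Suc c) x = x + nmul c x" by (simp add: nmul_def)
lemma nmul_add: "nmul (a + b) (x::'a::comm_monoid_add) = nmul a x + nmul b x"
  by (simp add: nmul_def replicate_add)
lemma nmul_zero[simp]: "nmul c (0::'a::monoid_add) = 0"
  by (induction c) (auto simp: nmul_Suc)
lemma nmul_mult: "nmul (a * b) (x::'a::comm_monoid_add) = nmul a (nmul b x)"
  by (induction a) (auto simp: nmul_Suc nmul_add)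
lemma nmul_sum: "(\<Sum>i<c. x) = nmul c (x::'a::comm_monoid_add)"
  by (induction c) (auto simp: nmul_Suc add.commute)

lemma word_sum_counts:
  fixes \<omega> :: "nat \<Rightarrow> 'a::comm_monoid_add"
  assumes "finite I" "set \<mu> \<subseteq> I"
  shows "word_sum \<omega> \<mu> = (\<Sum>i\<in>I. nmul (count_list \<mu> i) (\<omega> i))"
  using assms(2)
proof (induction \<mu>)
  case Nil
  then show ?case by (simp add: word_sum_def)
next
  case (Cons a \<mu>)
  have "(\<Sum>i\<in>I. nmul (count_list (a # \<mu>) i) (\<omega> i))
      = (\<Sum>i\<in>I. nmul (count_list \<mu> i) (\<omega> i) + (if a = i then \<omega> i else 0))"
    proof (rule sum.cong)
    fix i assume "i \<in> I"
    show "nmul (count_list (a # \<mu>) i) (\<omega> i) = nmul (count_list \<mu> i) (\<omega> i) + (if a = i then \<omega> i else 0)"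
    proof (cases "a = i")
      case True
      then have "count_list (a # \<mu>) i = count_list \<mu> i + 1" by simp
      then show ?thesis using True by (simp only: nmul_add) (simp add: nmul_Suc)
    next
      case False
      then show ?thesis by simp
    qed
  qed simp
  also have "\<dots> = (\<Sum>i\<in>I. nmul (count_list \<mu> i) (\<omega> i)) + (\<Sum>i\<in>I. if a = i then \<omega> i else 0)"
    by (rule sum.distrib)
  also have "(\<Sum>i\<in>I. if a = i then \<omega> i else 0) = \<omega> a"
    using Cons.prems assms(1) by (subst sum.delta') auto
  finally have s1: "(\<Sum>i\<in>I. nmul (count_list (a # \<mu>) i) (\<omega> i)) = (\<Sum>i\<in>I. nmul (count_list \<mu> i) (\<omega> i)) + \<omega> a" .
  have s2: "word_sum \<omega> (a # \<mu>) = \<omega> a + word_sum \<omega> \<mu>" by (simp add: word_sum_def)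
  have s3: "word_sum \<omega> \<mu> = (\<Sum>i\<in>I. nmul (count_list \<mu> i) (\<omega> i))" using Cons.IH Cons.prems by simp
  show ?case unfolding s1 s2 s3 by (rule add.commute)
qed

lemma dickson:
  fixes A :: "(nat \<Rightarrow> nat) set"
  assumes "finite X" "\<forall>f\<in>A. \<forall>i. i \<notin> X \<longrightarrow> f i = 0"
    "\<forall>f\<in>A. \<forall>g\<in>A. (\<forall>i\<in>X. f i \<le> g i) \<longrightarrow> f = g"
  shows "finite A"
  using assms
proof (induction "card X" arbitrary: X A rule: less_induct)
  case less
  show ?case
  proof (cases "A = {}")
    case True then show ?thesis by simp
  next
    case False
    then obtain f0 where f0: "f0 \<in> A" by auto
    have sub: "A \<subseteq> {f0} \<union> (\<Union>y\<in>X. \<Union>c\<in>{..<f0 y}. {g\<in>A. g y = c})"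
    proof
      fix g assume g: "g \<in> A"
      show "g \<in> {f0} \<union> (\<Union>y\<in>X. \<Union>c\<in>{..<f0 y}. {g\<in>A. g y = c})"
      proof (cases "g = f0")
        case True then show ?thesis by simp
      next
        case False
        then have "\<not> (\<forall>i\<in>X. f0 i \<le> g i)" using less.prems(3) f0 g by metis
        then obtain y where "y \<in> X" "g y < f0 y" by (auto simp: not_le)
        then show ?thesis using g by auto
      qed
    qed
    have fin: "finite {g\<in>A. g y = c}" if y: "y \<in> X" for y c
    proof -
      let ?B = "{g\<in>A. g y = c}"
      have inj: "inj_on (\<lambda>g. g(y:=0)) ?B"
      proof (rule inj_onI)
        fix g h assume "g \<in> ?B" "h \<in> ?B" "g(y:=0) = h(y:=0)"
        then have e: "g(y:=0) = h(y:=0)" and gy: "g y = c" and hy: "h y = c" by auto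
        show "g = h"
        proof
          fix x show "g x = h x"
          proof (cases "x = y")
            case True then show ?thesis using gy hy by simp
          next
            case False then show ?thesis using fun_cong[OF e, of x] by simp
          qed
        qed
      qed
      have "finite ((\<lambda>g. g(y:=0)) ` ?B)"
      proof (rule less.hyps[of "X - {y}"])
        show "card (X - {y}) < card X" using y less.prems(1) by (metis card_Diff1_less)
        show "finite (X - {y})" using less.prems(1) by simp
        show "\<forall>f\<in>(\<lambda>g. g(y:=0)) ` ?B. \<forall>i. i \<notin> X - {y} \<longrightarrow> f i = 0"
          using less.prems(2) by force
        show "\<forall>f\<in>(\<lambda>g. g(y:=0)) ` ?B. \<forall>g\<in>(\<lambda>g. g(y:=0)) ` ?B. (\<forall>i\<in>X - {y}. f i \<le> g i) \<longrightarrow> f = g"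
        proof (intro ballI impI)
          fix f g assume "f \<in> (\<lambda>g. g(y:=0)) ` ?B" "g \<in> (\<lambda>g. g(y:=0)) ` ?B"
            and le: "\<forall>i\<in>X - {y}. f i \<le> g i"
          then obtain f' g' where f': "f' \<in> ?B" "f = f'(y:=0)" and g': "g' \<in> ?B" "g = g'(y:=0)"
            by auto
          have "\<forall>i\<in>X. f' i \<le> g' i"
          proof
            fix i assume "i \<in> X"
            show "f' i \<le> g' i"
            proof (cases "i = y")
              case True then show ?thesis using f'(1) g'(1) by simp
            next
              case False then show ?thesis using le f'(2) g'(2) \<open>i \<in> X\<close> by auto
            qed
          qed
          then have "f' = g'" using less.prems(3) f' g' by auto
          then show "f = g" using f' g' by simp
        qed
      qed
      then show ?thesis using inj finite_imageD by blast
    qed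
    have "finite ({f0} \<union> (\<Union>y\<in>X. \<Union>c\<in>{..<f0 y}. {g\<in>A. g y = c}))"
      using fin less.prems(1) by (intro finite_UnI finite_UN_I) simp_all
    then show ?thesis using sub finite_subset by blast
  qed
qed

lemma csg_closed: "closed (closed_subsemigroup_gen G)"
  unfolding closed_subsemigroup_gen_def by (rule closed_Inter) auto
lemma csg_gen: "G \<subseteq> closed_subsemigroup_gen G"
  unfolding closed_subsemigroup_gen_def by auto
lemma csg_add: "x \<in> closed_subsemigroup_gen G \<Longrightarrow> y \<in> closed_subsemigroup_gen G
   \<Longrightarrow> x + y \<in> closed_subsemigroup_gen G"
  unfolding closed_subsemigroup_gen_def by auto


theorem proposition5p30:
  fixes \<omega> :: "nat \<Rightarrow> 'a::{topological_ab_group_add, t2_space, second_countable_topology}"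
    and n :: nat
  assumes "locally_compact_space (euclidean :: 'a topology)"
    and "n \<ge> 2"
    and "\<exists>K::nat. K > 0 \<and> (\<Sum>i<K. \<omega> 1) = 0"
    and "\<forall>j\<in>{1..n}. j \<noteq> 1 \<longrightarrow> - \<omega> j \<notin> Omega_1 n \<omega>"
  shows "\<forall>\<gamma>::'a. \<exists>U. open U \<and> \<gamma> \<in> U \<and> (U - {\<gamma>}) \<inter> Omega_set n \<omega> = {}"
proof
  fix \<gamma> :: 'a
  obtain K where K: "K > 0" "nmul K (\<omega> 1) = 0"
  proof -
    from assms(3) obtain K :: nat where "K > 0" "(\<Sum>i<K. \<omega> 1) = 0" by blast
    then show ?thesis using that[of K] by (simp add: nmul_sum)
  qed
  define S where "S = Omega_1 n \<omega>"
  have Sc: "closed S" unfolding S_def Omega_1_def by (rule csg_closed)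
  have Sadd: "x \<in> S \<Longrightarrow> y \<in> S \<Longrightarrow> x + y \<in> S" for x y
    unfolding S_def Omega_1_def by (rule csg_add)
  have Sgen: "i \<in> {1..n} \<Longrightarrow> \<omega> i \<in> S" for i
    unfolding S_def Omega_1_def by (rule subsetD[OF csg_gen]) simp
  have notS: "- \<omega> j \<notin> S" if "j \<in> {2..n}" for j
  proof -
    have "j \<in> {1..n}" "j \<noteq> 1" using that by auto
    then show ?thesis using assms(4) unfolding S_def by blast
  qed
  have w1S: "\<omega> 1 \<in> S" using assms(2) by (intro Sgen) simp
  have nmulpos: "x \<in> S \<Longrightarrow> nmul (Suc c) x \<in> S" for x c
    by (induction c) (auto simp: nmul_Suc Sadd)
  have S0: "0 \<in> S"
  proof -
    obtain k where "K = Suc k" using K(1) gr0_implies_Suc by blast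
    then show ?thesis using nmulpos[OF w1S, of k] K(2) by simp
  qed
  have Snmul: "x \<in> S \<Longrightarrow> nmul c x \<in> S" for x c
    by (cases c) (auto simp: S0 nmulpos)
  have Ssum: "finite I \<Longrightarrow> (\<forall>i\<in>I. f i \<in> S) \<Longrightarrow> sum f I \<in> S" for I and f :: "nat \<Rightarrow> 'a"
    by (induction I rule: finite_induct) (auto simp: S0 Sadd)
  have negw1: "- nmul a (\<omega> 1) = nmul (a * (K - 1)) (\<omega> 1)" for a
  proof -
    have "nmul (a * (K - 1)) (\<omega> 1) + nmul a (\<omega> 1) = nmul (a * K) (\<omega> 1)"
    proof -
      have "a * (K - 1) + a = a * K" using K(1) by (cases K) auto
      then show ?thesis by (metis nmul_add)
    qed
    also have "\<dots> = 0" by (simp only: nmul_mult K(2) nmul_zero)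
    finally show ?thesis by (metis add.commute minus_unique)
  qed
  have nmulmod: "nmul c (\<omega> 1) = nmul (c mod K) (\<omega> 1)" for c
  proof -
    have "nmul c (\<omega> 1) = nmul ((c div K) * K + c mod K) (\<omega> 1)" by simp
    also have "\<dots> = nmul (c mod K) (\<omega> 1)"
      by (simp only: nmul_add nmul_mult K(2) nmul_zero add_0)
    finally show ?thesis .
  qed
  define V where "V = (\<Inter>j\<in>{2..n}. {v. v - \<omega> j \<notin> S})"
  have openV: "open V"
  proof -
    have "open {v. v - \<omega> j \<notin> S}" for j
    proof -
      have "closed {v. v - \<omega> j \<in> S}"
        by (rule closed_vimage[OF Sc, unfolded vimage_def]) (intro continuous_intros)
      then show ?thesis by (simp add: open_Collect_neg)
    qed
    then show ?thesis unfolding V_def by auto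
  qed
  have V0: "0 \<in> V" unfolding V_def using notS by auto
  have key: "s + \<omega> j \<notin> V" if "s \<in> S" "j \<in> {2..n}" for s j
  proof
    assume "s + \<omega> j \<in> V"
    then have "s + \<omega> j - \<omega> j \<notin> S" using that(2) unfolding V_def by blast
    then show False using that(1) by simp
  qed
  have "eventually (\<lambda>p. fst p - snd p \<in> V) (nhds (\<gamma>, \<gamma>))"
  proof -
    have "((\<lambda>p. fst p - snd p) \<longlongrightarrow> fst (\<gamma>,\<gamma>) - snd (\<gamma>,\<gamma>)) (nhds (\<gamma>, \<gamma>))"
      by (intro tendsto_intros filterlim_ident)
    from topological_tendstoD[OF this openV] show ?thesis using V0 by simp
  qed
  then obtain Q where Q: "eventually Q (nhds \<gamma>)" "\<And>x y. Q x \<Longrightarrow> Q y \<Longrightarrow> x - y \<in> V"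
    unfolding nhds_prod eventually_prod_same by auto
  then obtain U where U: "open U" "\<gamma> \<in> U" "\<And>x. x \<in> U \<Longrightarrow> Q x"
    unfolding eventually_nhds by blast
  have UV: "x \<in> U \<Longrightarrow> y \<in> U \<Longrightarrow> x - y \<in> V" for x y using U Q by blast
  define cnt where "cnt \<mu> = (\<lambda>i. if i \<in> {2..n} then count_list \<mu> i else 0)" for \<mu> :: "nat list"
  have split: "{1..n} = insert 1 {2..n}" using assms(2) by auto
  have decomp: "\<mu> \<in> lists {1..n} \<Longrightarrow>
      word_sum \<omega> \<mu> = nmul (count_list \<mu> 1) (\<omega> 1) + (\<Sum>i\<in>{2..n}. nmul (cnt \<mu> i) (\<omega> i))" for \<mu>
  proof -
    assume "\<mu> \<in> lists {1..n}"
    then have "word_sum \<omega> \<mu> = (\<Sum>i\<in>{1..n}. nmul (count_list \<mu> i) (\<omega> i))"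
      by (intro word_sum_counts) auto
    also have "\<dots> = nmul (count_list \<mu> 1) (\<omega> 1) + (\<Sum>i\<in>{2..n}. nmul (count_list \<mu> i) (\<omega> i))"
      unfolding split by (subst sum.insert) auto
    also have "(\<Sum>i\<in>{2..n}. nmul (count_list \<mu> i) (\<omega> i)) = (\<Sum>i\<in>{2..n}. nmul (cnt \<mu> i) (\<omega> i))"
      by (rule sum.cong) (auto simp: cnt_def)
    finally show ?thesis .
  qed
  have diffS: "word_sum \<omega> \<nu> - word_sum \<omega> \<mu> - \<omega> j \<in> S"
    if \<mu>: "\<mu> \<in> lists {1..n}" and \<nu>: "\<nu> \<in> lists {1..n}"
      and le: "\<forall>i\<in>{2..n}. cnt \<mu> i \<le> cnt \<nu> i" and j: "j \<in> {2..n}" "cnt \<mu> j < cnt \<nu> j"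
    for \<mu> \<nu> j
  proof -
    define d where "d i = cnt \<nu> i - cnt \<mu> i" for i
    define P where "P = (\<Sum>i\<in>{2..n}. nmul (cnt \<mu> i) (\<omega> i))"
    define R where "R = nmul (d j - 1) (\<omega> j) + (\<Sum>i\<in>{2..n} - {j}. nmul (d i) (\<omega> i))"
    have RS: "R \<in> S" unfolding R_def
      using j by (intro Sadd Snmul Ssum ballI Sgen) auto
    have "(\<Sum>i\<in>{2..n}. nmul (cnt \<nu> i) (\<omega> i)) = (\<Sum>i\<in>{2..n}. nmul (cnt \<mu> i) (\<omega> i) + nmul (d i) (\<omega> i))"
      using le by (intro sum.cong) (auto simp: d_def nmul_add[symmetric])
    also have "\<dots> = P + (\<Sum>i\<in>{2..n}. nmul (d i) (\<omega> i))" by (simp add: sum.distrib P_def)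
    also have "(\<Sum>i\<in>{2..n}. nmul (d i) (\<omega> i)) = nmul (d j) (\<omega> j) + (\<Sum>i\<in>{2..n} - {j}. nmul (d i) (\<omega> i))"
      using j by (simp add: sum.remove)
    also have "nmul (d j) (\<omega> j) = \<omega> j + nmul (d j - 1) (\<omega> j)"
      using j by (metis Suc_diff_1 d_def nmul_Suc zero_less_diff)
    finally have nu: "word_sum \<omega> \<nu> = nmul (count_list \<nu> 1) (\<omega> 1) + (P + (\<omega> j + R))"
      using decomp[OF \<nu>] by (simp add: R_def add.assoc)
    have mu: "word_sum \<omega> \<mu> = nmul (count_list \<mu> 1) (\<omega> 1) + P"
      using decomp[OF \<mu>] by (simp add: P_def)
    have "word_sum \<omega> \<nu> - word_sum \<omega> \<mu> - \<omega> j
        = nmul (count_list \<nu> 1) (\<omega> 1) + R + - nmul (count_list \<mu> 1) (\<omega> 1)"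
      unfolding nu mu by (simp add: algebra_simps)
    also have "\<dots> = nmul (count_list \<nu> 1) (\<omega> 1) + R + nmul (count_list \<mu> 1 * (K - 1)) (\<omega> 1)"
      by (simp only: negw1)
    finally show ?thesis using RS w1S by (simp add: Sadd Snmul)
  qed
  define T where "T = {\<mu> \<in> lists {1..n}. word_sum \<omega> \<mu> \<in> U}"
  have finA: "finite (cnt ` T)"
  proof (rule dickson[of "{2..n}"])
    show "finite {2..n}" by simp
    show "\<forall>f\<in>cnt ` T. \<forall>i. i \<notin> {2..n} \<longrightarrow> f i = 0" by (auto simp: cnt_def)
    show "\<forall>f\<in>cnt ` T. \<forall>g\<in>cnt ` T. (\<forall>i\<in>{2..n}. f i \<le> g i) \<longrightarrow> f = g"
    proof (intro ballI impI)
      fix f g assume "f \<in> cnt ` T" "g \<in> cnt ` T" and le: "\<forall>i\<in>{2..n}. f i \<le> g i"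
      then obtain \<mu> \<nu> where \<mu>: "\<mu> \<in> T" "f = cnt \<mu>" and \<nu>: "\<nu> \<in> T" "g = cnt \<nu>" by auto
      show "f = g"
      proof (rule ccontr)
        assume "f \<noteq> g"
        then obtain j where "f j \<noteq> g j" by auto
        then have j1: "j \<in> {2..n}" using \<mu>(2) \<nu>(2) unfolding cnt_def by (cases "j \<in> {2..n}") auto
        then have j: "j \<in> {2..n}" "f j < g j" using le \<open>f j \<noteq> g j\<close> by (auto simp: le_neq_trans)
        have "word_sum \<omega> \<nu> - word_sum \<omega> \<mu> - \<omega> j \<in> S"
          using diffS[of \<mu> \<nu> j] \<mu> \<nu> le j by (auto simp: T_def)
        then have "word_sum \<omega> \<nu> - word_sum \<omega> \<mu> \<notin> V"
          using key[OF _ j(1)] by (metis diff_add_cancel)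
        moreover have "word_sum \<omega> \<nu> - word_sum \<omega> \<mu> \<in> V"
          using UV \<mu> \<nu> by (auto simp: T_def)
        ultimately show False by simp
      qed
    qed
  qed
  have sub: "U \<inter> Omega_set n \<omega> \<subseteq>
     (\<lambda>(f, r). nmul r (\<omega> 1) + (\<Sum>i\<in>{2..n}. nmul (f i) (\<omega> i))) ` (cnt ` T \<times> {..<K})"
  proof
    fix x assume "x \<in> U \<inter> Omega_set n \<omega>"
    then obtain \<mu> where \<mu>: "\<mu> \<in> T" "x = word_sum \<omega> \<mu>"
      unfolding Omega_set_def T_def by auto
    then have e: "x = nmul (count_list \<mu> 1 mod K) (\<omega> 1) + (\<Sum>i\<in>{2..n}. nmul (cnt \<mu> i) (\<omega> i))"
    proof -
      have "\<mu> \<in> lists {1..n}" using \<mu>(1) by (simp add: T_def)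
      from decomp[OF this] show ?thesis using \<mu>(2) by (simp only: nmulmod[of "count_list \<mu> 1"])
    qed
    have m: "(cnt \<mu>, count_list \<mu> 1 mod K) \<in> cnt ` T \<times> {..<K}"
      using \<mu> K(1) by auto
    show "x \<in> (\<lambda>(f, r). nmul r (\<omega> 1) + (\<Sum>i\<in>{2..n}. nmul (f i) (\<omega> i))) ` (cnt ` T \<times> {..<K})"
      by (rule rev_image_eqI[OF m]) (simp only: e prod.case)
  qed
  have finF: "finite (U \<inter> Omega_set n \<omega> - {\<gamma>})"
    using finite_subset[OF sub] finA by (meson finite_Diff finite_SigmaI finite_imageI finite_lessThan)
  define U' where "U' = U - (U \<inter> Omega_set n \<omega> - {\<gamma>})"
  have "open U'" unfolding U'_def using U(1) finF by (intro open_Diff finite_imp_closed)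
  moreover have "\<gamma> \<in> U'" using U(2) by (simp add: U'_def)
  moreover have "(U' - {\<gamma>}) \<inter> Omega_set n \<omega> = {}" by (auto simp: U'_def)
  ultimately show "\<exists>U. open U \<and> \<gamma> \<in> U \<and> (U - {\<gamma>}) \<inter> Omega_set n \<omega> = {}" by blast
qed

end
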